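(* The atom squaring function $\mathbb A^*\to\mathbb A^*$, which maps $a_1\cdots a_n$ to the concatenation of all two-letter words $a_ia_j$ for $i,j\in\{1,\ldots,n\}$ taken in lexicographic order of $(i,j)$ (i.e. $a_1a_1\,a_1a_2\cdots a_1a_n\,a_2a_1\cdots a_na_n$), is not computed by any pebble transducer with atoms that has at most two pebbles.
   Context: $\mathbb A$ is an infinite set of atoms. A pebble transducer with atoms, with input alphabet $\Sigma+\mathbb A$ and output alphabet $\Gamma+\mathbb A$ ($\Sigma,\Gamma$ finite), is given by a finite set of states $q$, each with a stack height $\dim(q)\in\{0,1,\ldots\}$, MSO universe formulas $\varphi_q(x_1,\ldots,x_{\dim(q)})$, and MSO formulas defining a linear order on configurations; all formulas are over the vocabulary $\{\le\}\cup\{a(x):a\in\Sigma\}$ of the input string (positions carrying atoms satisfy no label predicate). A configuration on input $w$ is a pair $(q,\bar a)$ with $\bar a$ a tuple of positions of length $\dim(q)$ satisfying $\varphi_q$ (the pebble stack; its last entry is the head). Stack discipline: for any two consecutive configurations in the order, one stack is a prefix of the other, or both have equal length and agree except on the last entry. Each state has an output which is a letter of $\Gamma$ or the symbol “atom under the head”, which outputs the atom at the head position if it carries an atom and the empty string otherwise. The output on $w$ is the concatenation of outputs of all configurations in the defined order. The number of pebbles is the maximal stack height. *)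

theory Defs
  imports Main "HOL-Library.Sublist"
begin

text \<open>First-order variables and second-order variables are indexed by
natural numbers (two separate name spaces).  Positions carrying atoms satisfy no label
predicate; atoms are otherwise invisible to formulas.\<close>

datatype 's mso =
    Lab 's nat
  | Le nat nat
  | Mem nat nat
  | Neg "'s mso"
  | Conj "'s mso" "'s mso"
  | ExFO nat "'s mso"
  | ExSO nat "'s mso"

fun fvFO :: "'s mso \<Rightarrow> nat set" where
  "fvFO (Lab a x) = {x}"
| "fvFO (Le x y) = {x, y}"
| "fvFO (Mem x X) = {x}"
| "fvFO (Neg f) = fvFO f"
| "fvFO (Conj f g) = fvFO f \<union> fvFO g"
| "fvFO (ExFO x f) = fvFO f - {x}"
| "fvFO (ExSO X f) = fvFO f"

fun fvSO :: "'s mso \<Rightarrow> nat set" where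
  "fvSO (Lab a x) = {}"
| "fvSO (Le x y) = {}"
| "fvSO (Mem x X) = {X}"
| "fvSO (Neg f) = fvSO f"
| "fvSO (Conj f g) = fvSO f \<union> fvSO g"
| "fvSO (ExFO x f) = fvSO f"
| "fvSO (ExSO X f) = fvSO f - {X}"

fun sat :: "('s + 'atom) list \<Rightarrow> (nat \<Rightarrow> nat) \<Rightarrow> (nat \<Rightarrow> nat set) \<Rightarrow> 's mso \<Rightarrow> bool" where
  "sat w nu mu (Lab a x) = (nu x < length w \<and> w ! nu x = Inl a)"
| "sat w nu mu (Le x y) = (nu x \<le> nu y)"
| "sat w nu mu (Mem x X) = (nu x \<in> mu X)"
| "sat w nu mu (Neg f) = (\<not> sat w nu mu f)"
| "sat w nu mu (Conj f g) = (sat w nu mu f \<and> sat w nu mu g)"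
| "sat w nu mu (ExFO x f) = (\<exists>p < length w. sat w (nu(x := p)) mu f)"
| "sat w nu mu (ExSO X f) = (\<exists>P \<subseteq> {..<length w}. sat w nu (mu(X := P)) f)"

datatype 'g outp = OutLetter 'g | OutHeadAtom

text \<open>States form the finite type 'q.  univ q is the universe formula phi_q with free
first-order variables 0 ..< dim q (the pebble stack x_1..x_dim(q)); ord p q defines
(p, as) <= (q, bs), with as assigned to variables 0 ..< dim p and bs to variables
dim p ..< dim p + dim q.\<close>

record ('s, 'g, 'q) pebble_transducer =
  dim  :: "'q \<Rightarrow> nat"
  univ :: "'q \<Rightarrow> 's mso"
  ord  :: "'q \<Rightarrow> 'q \<Rightarrow> 's mso"
  out  :: "'q \<Rightarrow> 'g outp"

definition configs :: "('s, 'g, 'q) pebble_transducer \<Rightarrow> ('s + 'atom) list \<Rightarrow> ('q \<times> nat list) set" where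
  "configs T w = {(q, as). length as = dim T q \<and> (\<forall>i\<in>set as. i < length w)
                     \<and> sat w (\<lambda>i. as ! i) (\<lambda>_. {}) (univ T q)}"

definition conf_ord :: "('s, 'g, 'q) pebble_transducer \<Rightarrow> ('s + 'atom) list
                        \<Rightarrow> (('q \<times> nat list) \<times> ('q \<times> nat list)) set" where
  "conf_ord T w = {(c, d). c \<in> configs T w \<and> d \<in> configs T w
                     \<and> sat w (\<lambda>i. (snd c @ snd d) ! i) (\<lambda>_. {}) (ord T (fst c) (fst d))}"

definition sorted_configs :: "('s, 'g, 'q) pebble_transducer \<Rightarrow> ('s + 'atom) list \<Rightarrow> ('q \<times> nat list) list" where
  "sorted_configs T w = (THE xs. set xs = configs T w \<and> distinct xs
                           \<and> sorted_wrt (\<lambda>c d. (c, d) \<in> conf_ord T w) xs)"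

definition stack_ok :: "('q \<times> nat list) \<Rightarrow> ('q \<times> nat list) \<Rightarrow> bool" where
  "stack_ok c d = (prefix (snd c) (snd d) \<or> prefix (snd d) (snd c)
                   \<or> (length (snd c) = length (snd d) \<and> butlast (snd c) = butlast (snd d)))"

definition valid_transducer :: "('s, 'g, 'q::finite) pebble_transducer \<Rightarrow> 'atom itself \<Rightarrow> bool" where
  "valid_transducer T _ =
     ((\<forall>q. fvFO (univ T q) \<subseteq> {..<dim T q} \<and> fvSO (univ T q) = {})
    \<and> (\<forall>p q. fvFO (ord T p q) \<subseteq> {..<dim T p + dim T q} \<and> fvSO (ord T p q) = {})
    \<and> (\<forall>w :: ('s + 'atom) list.
          linear_order_on (configs T w) (conf_ord T w)
        \<and> (\<forall>i. Suc i < length (sorted_configs T w) \<longrightarrow>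
               stack_ok (sorted_configs T w ! i) (sorted_configs T w ! Suc i))))"

definition num_pebbles :: "('s, 'g, 'q::finite) pebble_transducer \<Rightarrow> nat" where
  "num_pebbles T = Max (range (dim T))"

fun conf_out :: "('s, 'g, 'q) pebble_transducer \<Rightarrow> ('s + 'atom) list \<Rightarrow> ('q \<times> nat list) \<Rightarrow> ('g + 'atom) list" where
  "conf_out T w (q, as) =
     (case out T q of
        OutLetter g \<Rightarrow> [Inl g]
      | OutHeadAtom \<Rightarrow> (if as \<noteq> [] then (case w ! last as of Inr a \<Rightarrow> [Inr a] | Inl _ \<Rightarrow> []) else []))"

definition run :: "('s, 'g, 'q) pebble_transducer \<Rightarrow> ('s + 'atom) list \<Rightarrow> ('g + 'atom) list" where
  "run T w = concat (map (conf_out T w) (sorted_configs T w))"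

definition atom_square :: "'atom list \<Rightarrow> 'atom list" where
  "atom_square as = concat (map (\<lambda>a. concat (map (\<lambda>b. [a, b]) as)) as)"

definition computes_atom_square :: "('s, 'g, 'q) pebble_transducer \<Rightarrow> 'atom itself \<Rightarrow> bool" where
  "computes_atom_square T _ =
     (\<forall>u :: 'atom list. run T (map Inr u :: ('s + 'atom) list) = map Inr (atom_square u))"

end

theory Submission
  imports Defs
begin


lemma sorted_exists:
  assumes "finite F" "F \<subseteq> A" "trans r" "total_on A r"
  shows "\<exists>xs. set xs = F \<and> distinct xs \<and> sorted_wrt (\<lambda>c d. (c,d)\<in>r) xs"
  using assms(1,2)
proof (induction F rule: finite_induct)
  case empty then show ?case by simp
next
  case (insert x F)
  have "F \<subseteq> A" using insert.prems by simp
  then obtain xs where xs: "set xs = F" "distinct xs" "sorted_wrt (\<lambda>c d. (c,d)\<in>r) xs"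
    using insert.IH by blast
  define ys where "ys = filter (\<lambda>d. (d,x)\<in>r) xs @ x # filter (\<lambda>d. (d,x)\<notin>r) xs"
  have tot: "\<And>d. d \<in> F \<Longrightarrow> (d,x) \<notin> r \<Longrightarrow> (x,d) \<in> r"
  proof -
    fix d assume d: "d \<in> F" "(d,x) \<notin> r"
    have "d \<in> A" "x \<in> A" using insert.prems d(1) by auto
    moreover have "d \<noteq> x" using d(1) insert.hyps(2) by auto
    ultimately show "(x,d) \<in> r" using assms(4) d(2) unfolding total_on_def by metis
  qed
  have "set ys = insert x F" unfolding ys_def set_append set_filter list.set(2) using xs(1) by blast
  moreover have "distinct ys" unfolding ys_def distinct_append distinct.simps(2) set_filter
    using xs(1,2) insert.hyps(2) by (simp add: distinct_filter) blast
  moreover have "sorted_wrt (\<lambda>c d. (c,d)\<in>r) ys"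
  proof -
    have s1: "sorted_wrt (\<lambda>c d. (c,d)\<in>r) (filter (\<lambda>d. (d,x)\<in>r) xs)"
      using xs(3) by (rule sorted_wrt_filter)
    have s2: "sorted_wrt (\<lambda>c d. (c,d)\<in>r) (filter (\<lambda>d. (d,x)\<notin>r) xs)"
      using xs(3) by (rule sorted_wrt_filter)
    have c1: "\<forall>d\<in>set (filter (\<lambda>d. (d,x)\<notin>r) xs). (x,d)\<in>r"
      using tot xs(1) by simp
    have c2: "\<forall>d1\<in>set (filter (\<lambda>d. (d,x)\<in>r) xs). \<forall>d2\<in>set (x # filter (\<lambda>d. (d,x)\<notin>r) xs). (d1,d2)\<in>r"
    proof (intro ballI)
      fix d1 d2 assume a1: "d1 \<in> set (filter (\<lambda>d. (d,x)\<in>r) xs)"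
        and a2: "d2 \<in> set (x # filter (\<lambda>d. (d,x)\<notin>r) xs)"
      from a1 have d1x: "(d1,x)\<in>r" by simp
      have "d2 = x \<or> (x,d2)\<in>r"
      proof (cases "d2 = x")
        case False
        then have "d2 \<in> set (filter (\<lambda>d. (d,x)\<notin>r) xs)" using a2 by simp
        with c1 have "(x,d2) \<in> r" by (rule bspec)
        then show ?thesis by (rule disjI2)
      qed simp
      then show "(d1,d2)\<in>r"
      proof
        assume "d2 = x" with d1x show ?thesis by simp
      next
        assume "(x,d2)\<in>r" with d1x show ?thesis using assms(3) by (meson transD)
      qed
    qed
    have s3: "sorted_wrt (\<lambda>c d. (c,d)\<in>r) (x # filter (\<lambda>d. (d,x)\<notin>r) xs)"
      unfolding sorted_wrt.simps(2) by (rule conjI[OF c1 s2])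
    show ?thesis unfolding ys_def sorted_wrt_append
      by (rule conjI[OF s1 conjI[OF s3 c2]])
  qed
  ultimately show ?case by blast
qed
lemma sorted_unique:
  assumes "antisym r"
  shows "set xs = set ys \<Longrightarrow> distinct xs \<Longrightarrow> distinct ys \<Longrightarrow> sorted_wrt (\<lambda>c d. (c,d)\<in>r) xs
    \<Longrightarrow> sorted_wrt (\<lambda>c d. (c,d)\<in>r) ys \<Longrightarrow> xs = ys"
proof (induction xs arbitrary: ys)
  case Nil then show ?case by auto
next
  case (Cons x xs)
  then obtain y ys' where ys: "ys = y # ys'" by (cases ys) auto
  have "x = y"
  proof (rule ccontr)
    assume "x \<noteq> y"
    then have "y \<in> set xs" "x \<in> set ys'" using Cons.prems ys by auto
    then have "(x,y) \<in> r" "(y,x) \<in> r" using Cons.prems ys by auto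
    then show False using assms \<open>x \<noteq> y\<close> by (auto dest: antisymD)
  qed
  moreover have "set xs = set ys'" using Cons.prems ys \<open>x = y\<close>
    by (metis distinct.simps(2) Diff_insert_absorb list.set(2))
  ultimately show ?case using Cons ys by auto
qed

lemma sorted_configs_props:
  assumes "linear_order_on (configs T w) (conf_ord T w)" "finite (configs T w)"
  shows "set (sorted_configs T w) = configs T w \<and> distinct (sorted_configs T w)"
proof -
  have lo: "trans (conf_ord T w)" "antisym (conf_ord T w)" "total_on (configs T w) (conf_ord T w)"
    using assms(1) unfolding order_on_defs by auto
  let ?P = "\<lambda>xs. set xs = configs T w \<and> distinct xs \<and> sorted_wrt (\<lambda>c d. (c, d) \<in> conf_ord T w) xs"
  have "\<exists>!xs. ?P xs"
    using sorted_exists[OF assms(2) order_refl lo(1) lo(3)] sorted_unique[OF lo(2)] by metis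
  from theI'[OF this] show ?thesis unfolding sorted_configs_def by blast
qed

lemma concat_blocks:
  "concat (map (\<lambda>i. map (\<lambda>r. F (i*m+r)) [0..<m]) [0..<N]) = map F [0..<N*m]"
proof (induction N)
  case 0 then show ?case by simp
next
  case (Suc N)
  have "[0..<Suc N * m] = [0..<N*m] @ [N*m..<N*m+m]"
    using upt_add_eq_append[of 0 "N*m" m] by (simp add: add.commute)
  moreover have "[N*m..<N*m+m] = map (\<lambda>r. N*m + r) [0..<m]"
    using map_add_upt[of "N*m" m] by (simp add: add.commute)
  ultimately show ?case using Suc by simp
qed

definition sqF :: "'a list \<Rightarrow> nat \<Rightarrow> 'a" where
  "sqF u p = (if even p then u ! (p div (length u * 2)) else u ! ((p div 2) mod length u))"

lemma atom_square_map: "atom_square u = map (sqF u) [0..<length u * (length u * 2)]"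
proof -
  let ?n = "length u"
  have inner: "concat (map (\<lambda>b. [a, b]) u) =
     map (\<lambda>p. if even p then a else u ! (p div 2)) [0..<?n*2]" for a
  proof -
    have "concat (map (\<lambda>b. [a, b]) u) = concat (map (\<lambda>j. [a, u!j]) [0..<?n])"
      by (subst map_nth[symmetric]) (simp only: map_map o_def)
    also have "\<dots> = concat (map (\<lambda>j. map (\<lambda>r. (\<lambda>p. if even p then a else u ! (p div 2)) (j*2+r)) [0..<2]) [0..<?n])"
      by (simp add: upt_rec)
    also have "\<dots> = map (\<lambda>p. if even p then a else u ! (p div 2)) [0..<?n*2]" by (rule concat_blocks)
    finally show ?thesis .
  qed
  have "atom_square u = concat (map (\<lambda>i. concat (map (\<lambda>b. [u!i, b]) u)) [0..<?n])"
    unfolding atom_square_def by (subst map_nth[symmetric]) (simp only: map_map o_def)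
  also have "\<dots> = concat (map (\<lambda>i. map (\<lambda>r. sqF u (i*(?n*2)+r)) [0..<?n*2]) [0..<?n])"
  proof (rule arg_cong[where f=concat], rule map_cong[OF refl])
    fix i assume i: "i \<in> set [0..<?n]"
    show "concat (map (\<lambda>b. [u!i, b]) u) = map (\<lambda>r. sqF u (i*(?n*2)+r)) [0..<?n*2]"
      unfolding inner
    proof (rule map_cong[OF refl])
      fix r assume r: "r \<in> set [0..<?n*2]"
      then have r': "r < ?n*2" by simp
      have nz: "?n*2 \<noteq> 0" using r' by (cases u) auto
      have d1: "(i*(?n*2)+r) div (?n*2) = i"
        using r' div_mult_self1[OF nz, of r i] by (simp add: add.commute)
      have d2: "((i*(?n*2)+r) div 2) mod ?n = r div 2"
      proof -
        have "(i*(?n*2)+r) div 2 = i*?n + r div 2" by simp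
        moreover have "r div 2 < ?n" using r' by simp
        ultimately show ?thesis by simp
      qed
      show "(if even r then u!i else u ! (r div 2)) = sqF u (i*(?n*2)+r)"
        unfolding sqF_def using d1 d2 by simp
    qed
  qed
  also have "\<dots> = map (sqF u) [0..<?n * (?n*2)]" by (rule concat_blocks)
  finally show ?thesis .
qed



lemma stack_hd:
  assumes "stack_ok c d" "length (snd c) = 2" "length (snd d) = 2"
  shows "hd (snd c) = hd (snd d)"
proof -
  obtain x1 x2 where c: "snd c = [x1, x2]" using assms(2)
    by (metis (no_types) length_0_conv length_Suc_conv numeral_2_eq_2)
  obtain y1 y2 where d: "snd d = [y1, y2]" using assms(3)
    by (metis (no_types) length_0_conv length_Suc_conv numeral_2_eq_2)
  show ?thesis using assms(1) unfolding stack_ok_def c d by auto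
qed

lemma concat_single: "concat (map (\<lambda>c. [f c]) xs) = map f xs"
  by (induction xs) simp_all

lemma len_concat_le: "(\<And>c. length (g c) \<le> 1) \<Longrightarrow> length (concat (map g xs)) \<le> length xs"
proof (induction xs)
  case (Cons a xs)
  have "length (g a) \<le> 1" by (rule Cons.prems)
  then show ?case using Cons.IH[OF Cons.prems] by simp
qed simp

lemma card_range_pair: "card (range (\<lambda>q. (q::'q::finite, c))) \<le> card (UNIV :: 'q set)"
  by (rule card_image_le) simp



theorem mainTheorem8:
  fixes T :: "('s::finite, 'g::finite, 'q::finite) pebble_transducer"
  assumes "infinite (UNIV :: 'atom set)"
    and "valid_transducer T TYPE('atom)"
    and "num_pebbles T \<le> 2"
  shows "\<not> computes_atom_square T TYPE('atom)"
proof
  assume comp: "computes_atom_square T TYPE('atom)"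
  define k where "k = card (UNIV :: 'q set)"
  define M where "M = 4*k+2"
  define n where "n = 2*M*(k+1)"
  have k1: "k \<ge> 1" unfolding k_def using finite_UNIV_card_ge_0[where 'a='q] by simp
  obtain X :: "'atom set" where X: "finite X" "card X = n"
    using infinite_arbitrarily_large[OF assms(1)] by blast
  obtain u where u: "set u = X" "distinct u" using finite_distinct_list[OF X(1)] by blast
  have lu: "length u = n" using distinct_card[OF u(2)] u(1) X(2) by simp
  define w :: "('s + 'atom) list" where "w = map Inr u"
  define L where "L = sorted_configs T w"
  have lw: "length w = n" unfolding w_def using lu by simp
  have V1: "linear_order_on (configs T w) (conf_ord T w)"
    and V2: "\<And>i. Suc i < length L \<Longrightarrow> stack_ok (L ! i) (L ! Suc i)"
    using assms(2) unfolding valid_transducer_def L_def by blast+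
  have dimle: "\<And>q. dim T q \<le> 2"
  proof -
    fix q
    have "dim T q \<le> Max (range (dim T))" by (rule Max_ge) simp_all
    then show "dim T q \<le> 2" using assms(3) unfolding num_pebbles_def by simp
  qed
  have fin: "finite (configs T w)"
  proof (rule finite_subset)
    show "configs T w \<subseteq> (UNIV :: 'q set) \<times> {as. set as \<subseteq> {..<n} \<and> length as \<le> 2}"
      unfolding configs_def using dimle lw by auto
    show "finite ((UNIV :: 'q set) \<times> {as. set as \<subseteq> {..<n} \<and> length as \<le> (2::nat)})"
      by (intro finite_cartesian_product finite_lists_length_le) simp_all
  qed
  have LP: "set L = configs T w" "distinct L"
    using sorted_configs_props[OF V1 fin] unfolding L_def by simp_all
  have conf: "\<And>c. c \<in> set L \<Longrightarrow> length (snd c) \<le> 2 \<and> set (snd c) \<subseteq> {..<n}"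
  proof -
    fix c assume "c \<in> set L"
    then have "c \<in> configs T w" using LP(1) by simp
    then have "length (snd c) = dim T (fst c)" "\<forall>i\<in>set (snd c). i < length w"
      unfolding configs_def by auto
    then show "length (snd c) \<le> 2 \<and> set (snd c) \<subseteq> {..<n}" using dimle lw by auto
  qed
  have runeq: "concat (map (conf_out T w) L) = map Inr (atom_square u)"
    using comp unfolding computes_atom_square_def run_def L_def w_def by blast
  have outH: "\<And>c. c \<in> set L \<Longrightarrow> out T (fst c) = OutHeadAtom"
  proof (rule ccontr)
    fix c assume c: "c \<in> set L" "out T (fst c) \<noteq> OutHeadAtom"
    then obtain g where g: "out T (fst c) = OutLetter g" by (cases "out T (fst c)") auto
    have "conf_out T w c = [Inl g]" using g by (cases c) simp
    then have "Inl g \<in> set (concat (map (conf_out T w) L))" using c(1) by force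
    then show False unfolding runeq by auto
  qed
  have out2: "\<And>c. c \<in> set L \<Longrightarrow> length (snd c) = 2 \<Longrightarrow> conf_out T w c = [Inr (u ! last (snd c))]"
  proof -
    fix c assume c: "c \<in> set L" "length (snd c) = 2"
    obtain q as where qa: "c = (q, as)" by (cases c)
    have ne: "as \<noteq> []" using c(2) qa by auto
    then have "last as \<in> set as" by simp
    then have "last as < n" using conf[OF c(1)] qa by auto
    then have "w ! last as = Inr (u ! last as)" unfolding w_def using lu by simp
    moreover have "out T q = OutHeadAtom" using outH[OF c(1)] qa by simp
    ultimately show "conf_out T w c = [Inr (u ! last (snd c))]" using ne qa by simp
  qed
  have outle: "\<And>c. length (conf_out T w c) \<le> 1"
    by (case_tac c) (auto split: outp.split sum.split)
  have sqlen: "length (atom_square u) = n * (n*2)" using atom_square_map[of u] lu by simp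
  have Mpos0: "M > 0" unfolding M_def by simp
  have lenL: "n * (n*2) \<le> length L"
    using len_concat_le[of "conf_out T w" L, OF outle] runeq sqlen by simp
  define B where "B = {t. t < length L \<and> length (snd (L!t)) \<noteq> 2}"
  have finB: "finite B" unfolding B_def by simp
  have cardB: "card B \<le> k*(n+1)"
  proof -
    have inj: "inj_on (\<lambda>t. L!t) B"
      using LP(2) unfolding B_def inj_on_def by (simp add: nth_eq_iff_index_eq)
    define S1 where "S1 = insert [] ((\<lambda>i. [i]) ` {..<n})"
    have img: "(\<lambda>t. L!t) ` B \<subseteq> (UNIV::'q set) \<times> S1"
    proof
      fix c assume "c \<in> (\<lambda>t. L!t) ` B"
      then obtain t where t: "t < length L" "length (snd (L!t)) \<noteq> 2" "c = L!t"
        unfolding B_def by blast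
      then have cL: "c \<in> set L" by simp
      have l1: "length (snd c) \<le> 1" using conf[OF cL] t by auto
      have "snd c \<in> S1"
      proof (cases "snd c")
        case Nil then show ?thesis unfolding S1_def by simp
      next
        case (Cons i r)
        then have "r = []" using l1 by simp
        moreover have "i < n" using conf[OF cL] Cons by auto
        ultimately show ?thesis unfolding S1_def using Cons by auto
      qed
      then show "c \<in> (UNIV::'q set) \<times> S1" by (cases c) simp
    qed
    have cS1: "card S1 \<le> n+1"
    proof -
      have "card S1 \<le> Suc (card ((\<lambda>i. [i]) ` {..<n}))" unfolding S1_def by (rule card_insert_le_m1) simp_all
      moreover have "card ((\<lambda>i. [i]) ` {..<n}) \<le> n" using card_image_le[of "{..<n}" "\<lambda>i. [i]"] by simp
      ultimately show ?thesis by simp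
    qed
    have fS1: "finite S1" unfolding S1_def by simp
    have "card B = card ((\<lambda>t. L!t) ` B)" using card_image[OF inj] by simp
    also have "\<dots> \<le> card ((UNIV::'q set) \<times> S1)" by (rule card_mono) (use img fS1 in simp_all)
    also have "\<dots> = k * card S1" unfolding k_def by (simp add: card_cartesian_product)
    also have "\<dots> \<le> k*(n+1)" using cS1 by (rule mult_le_mono2)
    finally show ?thesis .
  qed
  have chunk: "\<And>a. a + M \<le> length L \<Longrightarrow> \<exists>t. a \<le> t \<and> t < a+M \<and> t \<in> B"
  proof (rule ccontr)
    fix a assume aM: "a + M \<le> length L" and nb: "\<not> (\<exists>t. a \<le> t \<and> t < a+M \<and> t \<in> B)"
    have G: "\<And>m. m < M \<Longrightarrow> length (snd (L!(a+m))) = 2"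
    proof (rule ccontr)
      fix m assume "m < M" "length (snd (L!(a+m))) \<noteq> 2"
      then have "a+m \<in> B" using aM unfolding B_def by simp
      then show False using nb \<open>m < M\<close> by force
    qed
    have inL: "\<And>m. m < M \<Longrightarrow> L!(a+m) \<in> set L" using aM by simp
    define x where "x = hd (snd (L!a))"
    have H: "\<And>m. m < M \<Longrightarrow> hd (snd (L!(a+m))) = x"
    proof -
      fix m show "m < M \<Longrightarrow> hd (snd (L!(a+m))) = x"
      proof (induction m)
        case 0 show ?case by (simp add: x_def)
      next
        case (Suc m)
        have "stack_ok (L!(a+m)) (L!Suc (a+m))" using V2 Suc.prems aM by simp
        moreover have "length (snd (L!(a+m))) = 2" using G Suc.prems by simp
        moreover have "length (snd (L!Suc (a+m))) = 2" using G[of "Suc m"] Suc.prems by simp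
        ultimately have "hd (snd (L!(a+m))) = hd (snd (L!(Suc (a+m))))" by (rule stack_hd)
        then show ?case using Suc by simp
      qed
    qed
    have shape: "\<And>m. m < M \<Longrightarrow> snd (L!(a+m)) = [x, last (snd (L!(a+m)))]"
    proof -
      fix m assume mM: "m < M"
      obtain y1 y2 where y: "snd (L!(a+m)) = [y1, y2]" using G[OF mM]
        by (metis (no_types) length_0_conv length_Suc_conv numeral_2_eq_2)
      show "snd (L!(a+m)) = [x, last (snd (L!(a+m)))]" using H[OF mM] y by simp
    qed
    have lastn: "\<And>m. m < M \<Longrightarrow> last (snd (L!(a+m))) < n"
    proof -
      fix m assume mM: "m < M"
      have "last (snd (L!(a+m))) \<in> set (snd (L!(a+m)))" using shape[OF mM] by (metis last_in_set list.distinct(1))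
      then show "last (snd (L!(a+m))) < n" using conf[OF inL[OF mM]] by auto
    qed
    define s where "s = length (concat (map (conf_out T w) (take a L)))"
    define Mid where "Mid = take M (drop a L)"
    define R where "R = drop M (drop a L)"
    have lmid: "length Mid = M" using aM by (simp add: Mid_def)
    have midnth: "\<And>m. m < M \<Longrightarrow> Mid ! m = L!(a+m)" using aM by (simp add: Mid_def)
    have midout: "concat (map (conf_out T w) Mid) = map (\<lambda>c. Inr (u ! last (snd c))) Mid"
    proof -
      have "map (conf_out T w) Mid = map (\<lambda>c. [Inr (u ! last (snd c))]) Mid"
      proof (rule map_cong[OF refl])
        fix c assume "c \<in> set Mid"
        then obtain m where m: "m < M" "c = Mid ! m" using lmid by (metis in_set_conv_nth)
        then have "c = L!(a+m)" using midnth by simp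
        then show "conf_out T w c = [Inr (u ! last (snd c))]" using out2 inL[OF m(1)] G[OF m(1)] by simp
      qed
      then have "concat (map (conf_out T w) Mid) = concat (map (\<lambda>c. [Inr (u ! last (snd c))]) Mid)" by (rule arg_cong)
      then show ?thesis by (simp only: concat_single)
    qed
    have split: "L = take a L @ Mid @ R" unfolding Mid_def R_def
      by (simp only: append_take_drop_id)
    have big: "map Inr (atom_square u) = concat (map (conf_out T w) (take a L)) @ map (\<lambda>c. Inr (u ! last (snd c))) Mid @ concat (map (conf_out T w) R)"
      using runeq midout split by (metis concat_append map_append)
    have key: "\<And>m. m < M \<Longrightarrow> s + m < n*(n*2) \<and> atom_square u ! (s+m) = u ! last (snd (L!(a+m)))"
    proof -
      fix m assume mM: "m < M"
      have len: "n*(n*2) = s + M + length (concat (map (conf_out T w) R))"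
        using arg_cong[OF big, of length] sqlen lmid unfolding s_def by simp
      then have lt: "s + m < n*(n*2)" using mM by simp
      have "map Inr (atom_square u) ! (s+m) = (map (\<lambda>c. Inr (u ! last (snd c))) Mid @ concat (map (conf_out T w) R)) ! m"
        unfolding big s_def by (simp add: nth_append)
      also have "\<dots> = Inr (u ! last (snd (Mid ! m)))" using mM lmid by (simp add: nth_append)
      finally have "Inr (atom_square u ! (s+m)) = (Inr (u ! last (snd (L!(a+m)))) :: ('g + 'atom))"
        using lt sqlen midnth[OF mM] by simp
      then show "s + m < n*(n*2) \<and> atom_square u ! (s+m) = u ! last (snd (L!(a+m)))" using lt by simp
    qed
    define e where "e = (if even s then 0 else 1::nat)"
    define mj where "mj j = e + 2*j" for j
    define v where "v j = (s + mj j) div (n*2)" for j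
    define v0 where "v0 = s div (n*2)"
    have ev: "\<And>j. even (s + mj j)" unfolding mj_def e_def by auto
    have mjM: "\<And>j. j \<le> 2*k \<Longrightarrow> mj j < M" unfolding mj_def e_def M_def by auto
    have Mle: "M \<le> n*2" unfolding n_def by simp
    have vj: "\<And>j. j \<le> 2*k \<Longrightarrow> v j = v0 \<or> v j = Suc v0"
    proof -
      fix j assume j: "j \<le> 2*k"
      have "v0 \<le> v j" unfolding v0_def v_def by (rule div_le_mono) simp
      moreover have "v j \<le> (s + n*2) div (n*2)" unfolding v_def
        using mjM[OF j] Mle by (intro div_le_mono) simp
      moreover have "(s + n*2) div (n*2) = Suc v0"
      proof -
        have "n*2 \<noteq> 0" using Mle Mpos0 by linarith
        then show ?thesis unfolding v0_def by (simp add: div_add_self2)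
      qed
      ultimately show "v j = v0 \<or> v j = Suc v0" by linarith
    qed
    have nz: "n*2 \<noteq> 0" using Mle Mpos0 by linarith
    have elem: "\<And>j. j \<le> 2*k \<Longrightarrow> L!(a + mj j) = (fst (L!(a + mj j)), [x, v j])"
    proof -
      fix j assume j: "j \<le> 2*k"
      have mM: "mj j < M" by (rule mjM[OF j])
      have k1': "s + mj j < n*(n*2)" and k2: "atom_square u ! (s + mj j) = u ! last (snd (L!(a + mj j)))"
        using key[OF mM] by simp_all
      have "atom_square u ! (s + mj j) = sqF u (s + mj j)"
        unfolding atom_square_map using k1' lu by simp
      also have "\<dots> = u ! v j" unfolding sqF_def v_def using ev[of j] lu by simp
      finally have eq: "u ! last (snd (L!(a + mj j))) = u ! v j" using k2 by simp
      have vn: "v j < n" unfolding v_def using k1' nz by (simp add: div_less_iff_less_mult mult.commute)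
      have "last (snd (L!(a + mj j))) = v j"
        using eq lastn[OF mM] vn u(2) lu by (simp add: nth_eq_iff_index_eq)
      then have "snd (L!(a + mj j)) = [x, v j]" using shape[OF mM] by simp
      then show "L!(a + mj j) = (fst (L!(a + mj j)), [x, v j])" by (metis prod.collapse)
    qed
    define g where "g j = L!(a + mj j)" for j
    have ginj: "inj_on g {..2*k}"
    proof (rule inj_onI)
      fix j1 j2 assume j: "j1 \<in> {..2*k}" "j2 \<in> {..2*k}" "g j1 = g j2"
      have "a + mj j1 < length L" "a + mj j2 < length L" using mjM j(1,2) aM by fastforce+
      then have "a + mj j1 = a + mj j2" using j(3) LP(2) unfolding g_def by (simp add: nth_eq_iff_index_eq)
      then show "j1 = j2" unfolding mj_def by simp
    qed
    define J0 where "J0 = {j \<in> {..2*k}. v j = v0}"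
    define J1 where "J1 = {j \<in> {..2*k}. v j = Suc v0}"
    have Ueq: "{..2*k} = J0 \<union> J1" unfolding J0_def J1_def using vj by auto
    have dis: "J0 \<inter> J1 = {}" unfolding J0_def J1_def by auto
    have f0: "finite J0" unfolding J0_def by simp
    have f1: "finite J1" unfolding J1_def by simp
    have "card (J0 \<union> J1) = card J0 + card J1" using f0 f1 dis by (rule card_Un_disjoint)
    then have cU: "card J0 + card J1 = 2*k+1" unfolding Ueq[symmetric] by simp
    have bound: "card J \<le> k" if JJ: "J \<subseteq> {..2*k}" "\<And>j. j \<in> J \<Longrightarrow> v j = vv" for J vv
    proof -
      have "card J = card (g ` J)" using card_image[OF inj_on_subset[OF ginj JJ(1)]] by simp
      also have "\<dots> \<le> card (range (\<lambda>q. (q::'q, [x, vv])))"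
      proof (rule card_mono)
        show "finite (range (\<lambda>q. (q::'q, [x, vv])))" by simp
        show "g ` J \<subseteq> range (\<lambda>q. (q::'q, [x, vv]))"
        proof
          fix c assume "c \<in> g ` J"
          then obtain j where jj: "j \<in> J" "c = g j" by blast
          then have "c = (fst c, [x, vv])" using elem[of j] JJ unfolding g_def by auto
          then show "c \<in> range (\<lambda>q. (q::'q, [x, vv]))" by (metis rangeI)
        qed
      qed
      also have "\<dots> \<le> k" unfolding k_def by (rule card_range_pair)
      finally show ?thesis .
    qed
    have "card J0 \<le> k" by (rule bound[of J0 v0]) (auto simp: J0_def)
    moreover have "card J1 \<le> k" by (rule bound[of J1 "Suc v0"]) (auto simp: J1_def)
    ultimately show False using cU by simp
  qed
  define C where "C = length L div M"
  have "\<forall>c. \<exists>t. c < C \<longrightarrow> c*M \<le> t \<and> t < c*M+M \<and> t \<in> B"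
  proof
    fix c
    show "\<exists>t. c < C \<longrightarrow> c*M \<le> t \<and> t < c*M+M \<and> t \<in> B"
    proof (cases "c < C")
      case True
      then have "Suc c * M \<le> C * M" by (intro mult_le_mono1) simp
      moreover have "C * M \<le> length L" unfolding C_def by (rule div_times_less_eq_dividend)
      ultimately have "c*M + M \<le> length L" by simp
      then show ?thesis using chunk[of "c*M"] by blast
    qed simp
  qed
  then obtain b where b: "\<And>c. c < C \<Longrightarrow> c*M \<le> b c \<and> b c < c*M+M \<and> b c \<in> B"
    by metis
  have "inj_on b {..<C}"
  proof (rule inj_onI)
    fix c1 c2 assume c: "c1 \<in> {..<C}" "c2 \<in> {..<C}" "b c1 = b c2"
    show "c1 = c2"
    proof (rule ccontr)
      assume "c1 \<noteq> c2"
      then consider "c1 < c2" | "c2 < c1" by linarith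
      then show False
      proof cases
        case 1
        then have "Suc c1 * M \<le> c2 * M" by (intro mult_le_mono1) simp
        then show False using b[of c1] b[of c2] c by simp
      next
        case 2
        then have "Suc c2 * M \<le> c1 * M" by (intro mult_le_mono1) simp
        then show False using b[of c1] b[of c2] c by simp
      qed
    qed
  qed
  moreover have "b ` {..<C} \<subseteq> B" using b by auto
  ultimately have "card {..<C} \<le> card B" using finB by (metis card_inj_on_le)
  then have CB: "C \<le> k*(n+1)" using cardB by simp
  have e: "n*2 = M*(4*(k+1))" by (simp add: n_def algebra_simps)
  have Mpos: "M > 0" unfolding M_def by simp
  have "n*(n*2) div M = 4*(k+1)*n" unfolding e using Mpos by simp
  moreover have "n*(n*2) div M \<le> C" unfolding C_def using lenL by (rule div_le_mono)
  ultimately have "4*(k+1)*n \<le> k*(n+1)" using CB by simp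
  then have "4*k*n + 4*n \<le> k*n + k" by (simp add: algebra_simps)
  moreover have "k \<le> n" unfolding n_def M_def by simp
  moreover have "n \<ge> 1" unfolding n_def M_def by simp
  ultimately show False by linarith
qed

end
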